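(* Let $\mathcal G$ be a second countable Baire topological space, let $X$ be a finite-dimensional $C^1$ manifold (Hausdorff, second countable), and let $\mathcal H \subset \mathcal G \times X$ be a closed subset. Suppose that for each $(g_0,x_0)\in\mathcal H$ there exists an $n$-dimensional slice across $\mathcal H$ at $(g_0,x_0)$ for some $n > \dim X$. Then the set \[ \{g \in \mathcal G : (g,x) \in \mathcal H \text{ for some } x \in X \} \] is meager in $\mathcal G$. If moreover $X$ is compact, then this set is closed and nowhere dense.
   Context: Given $(g_0,x_0)\in\mathcal H$ and a positive integer $n$, an $n$-dimensional slice across $\mathcal H$ at $(g_0,x_0)$ is a map $\Phi:U\times V\to\mathbb R^n$, where $U$ is a neighborhood of $0$ in $\mathbb R^n$ and $V$ a neighborhood of $x_0$ in $X$, such that: (1) there is a continuous map $\rho:U\to\mathcal G$ with $\rho(0)=g_0$; (2) there is a continuous map $\pi:\rho(U)\times V\to\mathbb R^n$ with $\pi(\mathcal H)=\{0\}$ (i.e. $\pi$ vanishes on $\mathcal H\cap(\rho(U)\times V)$); (3) $\Phi(s,x)=\pi(\rho(s),x)$ is $C^1$ on $U\times V$; (4) $\det d_s\Phi(0,x_0)\neq 0$. *)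

theory Defs
  imports "HOL-Analysis.Analysis" "HOL-Combinatorics.Permutations"
begin

definition nowhere_dense_in :: "'a topology \<Rightarrow> 'a set \<Rightarrow> bool" where
  "nowhere_dense_in T S \<longleftrightarrow> S \<subseteq> topspace T \<and> T interior_of (T closure_of S) = {}"

definition meager_in :: "'a topology \<Rightarrow> 'a set \<Rightarrow> bool" where
  "meager_in T S \<longleftrightarrow>
     (\<exists>\<N>. countable \<N> \<and> (\<forall>N\<in>\<N>. nowhere_dense_in T N) \<and> S = \<Union>\<N>)"

definition Baire_space :: "'a topology \<Rightarrow> bool" where
  "Baire_space T \<longleftrightarrow>
     (\<forall>\<U>. countable \<U> \<and> (\<forall>U\<in>\<U>. openin T U \<and> T closure_of U = topspace T)
        \<longrightarrow> T closure_of (topspace T \<inter> \<Inter>\<U>) = topspace T)"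

text \<open>The points of R^p are the elements of topspace (Euclidean_space p). A pair
  (s,y) in R^p x R^q is encoded as the concatenated vector in R^(p+q).\<close>

definition concat_vec :: "nat \<Rightarrow> (nat \<Rightarrow> real) \<Rightarrow> (nat \<Rightarrow> real) \<Rightarrow> (nat \<Rightarrow> real)" where
  "concat_vec p s y = (\<lambda>i. if i < p then s i else y (i - p))"

definition partial_diffble :: "((nat \<Rightarrow> real) \<Rightarrow> (nat \<Rightarrow> real)) \<Rightarrow> nat \<Rightarrow> nat \<Rightarrow> (nat \<Rightarrow> real) \<Rightarrow> bool" where
  "partial_diffble f i j a \<longleftrightarrow> (\<lambda>t. f (a(j := a j + t)) i) differentiable (at 0)"

definition partial :: "((nat \<Rightarrow> real) \<Rightarrow> (nat \<Rightarrow> real)) \<Rightarrow> nat \<Rightarrow> nat \<Rightarrow> (nat \<Rightarrow> real) \<Rightarrow> real" where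
  "partial f i j a = deriv (\<lambda>t. f (a(j := a j + t)) i) 0"

definition C1_on :: "nat \<Rightarrow> nat \<Rightarrow> (nat \<Rightarrow> real) set \<Rightarrow> ((nat \<Rightarrow> real) \<Rightarrow> (nat \<Rightarrow> real)) \<Rightarrow> bool" where
  "C1_on p q S f \<longleftrightarrow>
     (\<forall>i<q. \<forall>j<p. (\<forall>a\<in>S. partial_diffble f i j a) \<and>
        continuous_map (subtopology (Euclidean_space p) S) euclideanreal (partial f i j))"

definition det_n :: "nat \<Rightarrow> (nat \<Rightarrow> nat \<Rightarrow> real) \<Rightarrow> real" where
  "det_n n M = (\<Sum>\<sigma> | \<sigma> permutes {..<n}. of_int (sign \<sigma>) * (\<Prod>i<n. M i (\<sigma> i)))"

definition chart :: "'x topology \<Rightarrow> nat \<Rightarrow> 'x set \<times> ('x \<Rightarrow> (nat \<Rightarrow> real)) \<Rightarrow> bool" where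
  "chart X m c \<longleftrightarrow> openin X (fst c) \<and> openin (Euclidean_space m) (snd c ` fst c) \<and>
     homeomorphic_map (subtopology X (fst c)) (subtopology (Euclidean_space m) (snd c ` fst c)) (snd c)"

definition C1_atlas :: "'x topology \<Rightarrow> nat \<Rightarrow> ('x set \<times> ('x \<Rightarrow> (nat \<Rightarrow> real))) set \<Rightarrow> bool" where
  "C1_atlas X m A \<longleftrightarrow> (\<forall>c\<in>A. chart X m c) \<and> topspace X \<subseteq> (\<Union>c\<in>A. fst c) \<and>
     (\<forall>c1\<in>A. \<forall>c2\<in>A. C1_on m m (snd c1 ` (fst c1 \<inter> fst c2))
                        (snd c2 \<circ> inv_into (fst c1) (snd c1)))"

definition C1_manifold :: "'x topology \<Rightarrow> nat \<Rightarrow> ('x set \<times> ('x \<Rightarrow> (nat \<Rightarrow> real))) set \<Rightarrow> bool" where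
  "C1_manifold X m A \<longleftrightarrow> Hausdorff_space X \<and> second_countable X \<and> C1_atlas X m A"

definition C1_on_prod :: "'x topology \<Rightarrow> nat \<Rightarrow> ('x set \<times> ('x \<Rightarrow> (nat \<Rightarrow> real))) set \<Rightarrow>
     nat \<Rightarrow> nat \<Rightarrow> (nat \<Rightarrow> real) set \<Rightarrow> 'x set \<Rightarrow> ((nat \<Rightarrow> real) \<Rightarrow> 'x \<Rightarrow> (nat \<Rightarrow> real)) \<Rightarrow> bool" where
  "C1_on_prod X m A n q U V F \<longleftrightarrow>
     (\<forall>c\<in>A. C1_on (n + m) q
        {concat_vec n s y | s y. s \<in> U \<and> y \<in> snd c ` (V \<inter> fst c)}
        (\<lambda>z. F (\<lambda>i. if i < n then z i else 0) (inv_into (fst c) (snd c) (\<lambda>i. z (n + i)))))"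

definition slice_across ::
  "'g topology \<Rightarrow> 'x topology \<Rightarrow> nat \<Rightarrow> ('x set \<times> ('x \<Rightarrow> (nat \<Rightarrow> real))) set \<Rightarrow>
   ('g \<times> 'x) set \<Rightarrow> 'g \<Rightarrow> 'x \<Rightarrow> nat \<Rightarrow>
   (nat \<Rightarrow> real) set \<Rightarrow> 'x set \<Rightarrow> ((nat \<Rightarrow> real) \<Rightarrow> 'x \<Rightarrow> (nat \<Rightarrow> real)) \<Rightarrow> bool" where
  "slice_across G X m A H g0 x0 n U V \<Phi> \<longleftrightarrow>
     openin (Euclidean_space n) U \<and> (\<lambda>i. 0) \<in> U \<and> openin X V \<and> x0 \<in> V \<and>
     (\<exists>\<rho> \<pi>.
        continuous_map (subtopology (Euclidean_space n) U) G \<rho> \<and> \<rho> (\<lambda>i. 0) = g0 \<and>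
        continuous_map (subtopology (prod_topology G X) (\<rho> ` U \<times> V)) (Euclidean_space n) (\<lambda>(g,x). \<pi> g x) \<and>
        (\<forall>g x. (g, x) \<in> H \<inter> (\<rho> ` U \<times> V) \<longrightarrow> \<pi> g x = (\<lambda>i. 0)) \<and>
        (\<forall>s\<in>U. \<forall>x\<in>V. \<Phi> s x = \<pi> (\<rho> s) x)) \<and>
     C1_on_prod X m A n n U V \<Phi> \<and>
     det_n n (\<lambda>i j. partial (\<lambda>s. \<Phi> s x0) i j (\<lambda>i. 0)) \<noteq> 0"

definition has_slice ::
  "'g topology \<Rightarrow> 'x topology \<Rightarrow> nat \<Rightarrow> ('x set \<times> ('x \<Rightarrow> (nat \<Rightarrow> real))) set \<Rightarrow>
   ('g \<times> 'x) set \<Rightarrow> 'g \<Rightarrow> 'x \<Rightarrow> nat \<Rightarrow> bool" where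
  "has_slice G X m A H g0 x0 n \<longleftrightarrow> (\<exists>U V \<Phi>. slice_across G X m A H g0 x0 n U V \<Phi>)"

end

theory Submission
  imports Defs Jordan_Normal_Form.Determinant
begin

lemma det_n_eq: "det_n n M = Determinant.det (mat n n (\<lambda>(i,j). M i j))"
  unfolding det_n_def by (subst det_def'[of _ n]) (auto simp: atLeast0LessThan intro!: sum.cong prod.cong)

lemma det_n_bound:
  fixes M :: "nat \<Rightarrow> nat \<Rightarrow> real"
  assumes "det_n n M \<noteq> 0"
  shows "\<exists>\<beta>>0. \<forall>v T. (\<forall>k<n. \<bar>\<Sum>j<n. M k j * v j\<bar> \<le> T) \<longrightarrow> (\<forall>i<n. \<bar>v i\<bar> \<le> \<beta> * T)"
proof -
  define A where "A = mat n n (\<lambda>(i,j). M i j)"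
  have A: "A \<in> carrier_mat n n" unfolding A_def by simp
  have "Determinant.det A \<noteq> 0" using assms det_n_eq A_def by simp
  then obtain B where B: "B \<in> carrier_mat n n" and BA: "B * A = 1\<^sub>m n"
    using det_non_zero_imp_unit[OF A, of "undefined"] unfolding Units_def ring_mat_def
    by (auto simp: ring_mat_def)
  have BA': "(\<Sum>k<n. B $$ (i,k) * M k j) = (if i = j then 1 else 0)" if "i<n" "j<n" for i j
  proof -
    have "(B * A) $$ (i,j) = (if i = j then 1 else 0)" using BA that by simp
    then show ?thesis using B that unfolding A_def
      by (simp add: times_mat_def scalar_prod_def atLeast0LessThan)
  qed
  define \<beta> where "\<beta> = 1 + (\<Sum>i<n. \<Sum>k<n. \<bar>B $$ (i,k)\<bar>)"
  have \<beta>: "\<beta> > 0" unfolding \<beta>_def by (smt (verit) sum_nonneg abs_ge_zero)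
  show ?thesis
  proof (intro exI[of _ \<beta>] conjI \<beta> allI impI)
    fix v T i assume H: "\<forall>k<n. \<bar>\<Sum>j<n. M k j * v j\<bar> \<le> T" and i: "i < n"
    have T: "T \<ge> 0" using H i by force
    have "(\<Sum>j<n. (if i = j then 1 else 0) * v j) = (\<Sum>j<n. if i = j then v j else 0)"
      by (intro sum.cong) auto
    also have "\<dots> = v i" using i by simp
    finally have "v i = (\<Sum>j<n. (if i = j then 1 else 0) * v j)" by simp
    also have "\<dots> = (\<Sum>j<n. (\<Sum>k<n. B $$ (i,k) * M k j) * v j)" using BA' i by simp
    also have "\<dots> = (\<Sum>k<n. B $$ (i,k) * (\<Sum>j<n. M k j * v j))"
      by (simp add: sum_distrib_left sum_distrib_right mult.assoc) (rule sum.swap)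
    finally have "\<bar>v i\<bar> \<le> (\<Sum>k<n. \<bar>B $$ (i,k)\<bar> * \<bar>\<Sum>j<n. M k j * v j\<bar>)"
      by (metis (no_types, lifting) abs_mult sum.cong sum_abs)
    also have "\<dots> \<le> (\<Sum>k<n. \<bar>B $$ (i,k)\<bar> * T)"
      using H by (intro sum_mono mult_left_mono) auto
    also have "\<dots> = (\<Sum>k<n. \<bar>B $$ (i,k)\<bar>) * T" by (simp add: sum_distrib_right)
    also have "\<dots> \<le> \<beta> * T"
    proof (rule mult_right_mono[OF _ T])
      have "(\<Sum>k<n. \<bar>B $$ (i,k)\<bar>) \<le> (\<Sum>i<n. \<Sum>k<n. \<bar>B $$ (i,k)\<bar>)"
        using i by (intro member_le_sum) (auto intro: sum_nonneg)
      then show "(\<Sum>k<n. \<bar>B $$ (i,k)\<bar>) \<le> \<beta>" unfolding \<beta>_def by simp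
    qed
    finally show "\<bar>v i\<bar> \<le> \<beta> * T" .
  qed
qed

lemma box_lemma:
  assumes "openin (Euclidean_space p) Op" "a \<in> Op"
  shows "\<exists>r>0. \<forall>z\<in>topspace (Euclidean_space p). (\<forall>l<p. \<bar>z l - a l\<bar> < r) \<longrightarrow> z \<in> Op"
proof -
  obtain T where T: "openin (powertop_real UNIV) T" and OT: "Op = T \<inter> {x. \<forall>i\<ge>p. x i = 0}"
    using assms(1) unfolding Euclidean_space_def openin_subtopology by blast
  have aT: "a \<in> T" and a0: "\<forall>i\<ge>p. a i = 0" using assms(2) OT by auto
  obtain X where X: "a \<in> (\<Pi>\<^sub>E i\<in>UNIV. X i)" "\<forall>i. openin euclideanreal (X i)"
     "finite {i. X i \<noteq> topspace euclideanreal}" "(\<Pi>\<^sub>E i\<in>UNIV. X i) \<subseteq> T"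
    using product_topology_open_contains_basis[OF T aT] by blast
  define F where "F = {i. X i \<noteq> UNIV}"
  have fin: "finite F" using X(3) unfolding F_def by simp
  have "\<forall>i\<in>F. \<exists>r>0. ball (a i) r \<subseteq> X i"
    using X(1,2) by (auto simp: open_contains_ball)
  then obtain R where R: "\<forall>i\<in>F. R i > 0 \<and> ball (a i) (R i) \<subseteq> X i" by metis
  define r where "r = Min (insert 1 (R ` F))"
  have r0: "r > 0" unfolding r_def using fin R by (subst Min_gr_iff) auto
  have rR: "r \<le> R i" if "i \<in> F" for i unfolding r_def using fin that by (intro Min_le) auto
  show ?thesis
  proof (intro exI[of _ r] conjI r0 ballI impI)
    fix z assume z: "z \<in> topspace (Euclidean_space p)" and zl: "\<forall>l<p. \<bar>z l - a l\<bar> < r"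
    have "z i \<in> X i" for i
    proof (cases "i \<in> F")
      case True
      have "\<bar>z i - a i\<bar> < r"
      proof (cases "i < p")
        case True then show ?thesis using zl by auto
      next
        case False then show ?thesis using z a0 r0 by (auto simp: topspace_Euclidean_space)
      qed
      then have "z i \<in> ball (a i) (R i)" using rR[OF True] by (simp add: dist_real_def abs_minus_commute)
      then show ?thesis using R True by (meson subsetD)
    next
      case False then show ?thesis unfolding F_def by auto
    qed
    then have "z \<in> T" using X(4) by auto
    then show "z \<in> Op" using z OT by (auto simp: topspace_Euclidean_space)
  qed
qed

lemma finite_pos_min:
  fixes P :: "'a \<Rightarrow> real \<Rightarrow> bool"
  assumes "finite F" "\<forall>i\<in>F. \<exists>r>0. P i r"
    and "\<And>i r r'. P i r \<Longrightarrow> 0 < r' \<Longrightarrow> r' \<le> r \<Longrightarrow> P i r'"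
  shows "\<exists>r>0. \<forall>i\<in>F. P i r"
  using assms(1,2)
proof (induction F rule: finite_induct)
  case empty then show ?case by (auto intro: exI[of _ "1::real"])
next
  case (insert x F)
  then obtain r1 where r1: "r1 > 0" "\<forall>i\<in>F. P i r1" by auto
  obtain r2 where r2: "r2 > 0" "P x r2" using insert by auto
  show ?case using r1 r2 assms(3)
    by (intro exI[of _ "min r1 r2"]) (auto simp: min_def)
qed

lemma mvt_between:
  fixes h h' :: "real \<Rightarrow> real"
  assumes "\<And>t. min 0 d \<le> t \<Longrightarrow> t \<le> max 0 d \<Longrightarrow> DERIV h t :> h' t"
  shows "\<exists>\<tau>. min 0 d \<le> \<tau> \<and> \<tau> \<le> max 0 d \<and> h d - h 0 = d * h' \<tau>"
proof (cases "d = 0")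
  case True then show ?thesis by (intro exI[of _ 0]) auto
next
  case False
  show ?thesis
  proof (cases "d > 0")
    case True
    obtain z where "0 < z" "z < d" "h d - h 0 = (d - 0) * h' z"
      using MVT2[OF True, of h h'] assms True by auto
    then show ?thesis using True by (intro exI[of _ z]) auto
  next
    case nd: False
    with False have d: "d < 0" by auto
    obtain z where "d < z" "z < 0" "h 0 - h d = (0 - d) * h' z"
      using MVT2[OF d, of h h'] assms d by auto
    then show ?thesis using d by (intro exI[of _ z]) (auto simp: algebra_simps)
  qed
qed

lemma partial_deriv_at:
  assumes "partial_diffble f i k (w(k := w k + t))"
  shows "DERIV (\<lambda>t. f (w(k := w k + t)) i) t :> partial f i k (w(k := w k + t))"
proof -
  let ?c = "w(k := w k + t)"
  have eq: "(\<lambda>t'. f (?c(k := ?c k + t')) i) = (\<lambda>t'. f (w(k := w k + (t' + t))) i)"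
    by (auto simp: algebra_simps)
  have "DERIV (\<lambda>t'. f (?c(k := ?c k + t')) i) 0 :> partial f i k ?c"
    using assms unfolding partial_diffble_def partial_def
    by (simp add: DERIV_deriv_iff_real_differentiable)
  then have "DERIV (\<lambda>t'. f (w(k := w k + (t' + t))) i) 0 :> partial f i k ?c"
    using eq by simp
  then show ?thesis using DERIV_shift[of "\<lambda>t. f (w(k := w k + t)) i" _ 0 t] by simp
qed

definition inbox :: "nat \<Rightarrow> (nat \<Rightarrow> real) \<Rightarrow> real \<Rightarrow> (nat \<Rightarrow> real) \<Rightarrow> bool" where
  "inbox p c r z \<longleftrightarrow> z \<in> topspace (Euclidean_space p) \<and> (\<forall>l<p. \<bar>z l - c l\<bar> \<le> r)"

lemma stair:
  fixes f :: "(nat\<Rightarrow>real) \<Rightarrow> (nat\<Rightarrow>real)"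
  assumes box: "\<forall>z. inbox p c r z \<longrightarrow> z \<in> S"
    and diff: "\<forall>j<p. \<forall>a\<in>S. partial_diffble f i j a"
    and a: "inbox p c r a" and b: "inbox p c r b"
  shows "\<exists>\<xi>. (\<forall>j<p. inbox p c r (\<xi> j)) \<and>
      f b i - f a i = (\<Sum>j<p. partial f i j (\<xi> j) * (b j - a j))"
proof -
  define w where "w k = (\<lambda>l. if l < k then b l else a l)" for k
  have a0: "\<forall>l\<ge>p. a l = 0" and b0: "\<forall>l\<ge>p. b l = 0"
    using a b by (auto simp: inbox_def topspace_Euclidean_space)
  have "\<exists>\<xi>. (\<forall>j<k. inbox p c r (\<xi> j)) \<and>
      f (w k) i - f a i = (\<Sum>j<k. partial f i j (\<xi> j) * (b j - a j))" if "k \<le> p" for k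
    using that
  proof (induction k)
    case 0
    have "w 0 = a" unfolding w_def by auto
    then show ?case by auto
  next
    case (Suc k)
    then obtain \<xi> where \<xi>: "\<forall>j<k. inbox p c r (\<xi> j)"
      "f (w k) i - f a i = (\<Sum>j<k. partial f i j (\<xi> j) * (b j - a j))" by auto
    have kp: "k < p" using Suc by auto
    define d where "d = b k - a k"
    define h where "h t = f ((w k)(k := w k k + t)) i" for t
    have wkk: "w k k = a k" unfolding w_def by auto
    have inb: "inbox p c r ((w k)(k := w k k + t))" if "min 0 d \<le> t" "t \<le> max 0 d" for t
    proof -
      have "\<bar>a k + t - c k\<bar> \<le> r" using a b kp that unfolding inbox_def d_def
        by (smt (verit))
      moreover have "\<bar>w k l - c l\<bar> \<le> r" if "l < p" for l
        using a b that unfolding inbox_def w_def by auto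
      moreover have "w k l = 0" if "l \<ge> p" for l using a0 b0 that unfolding w_def by auto
      ultimately show ?thesis using kp unfolding inbox_def topspace_Euclidean_space wkk
        by auto
    qed
    have "DERIV h t :> partial f i k ((w k)(k := w k k + t))" if "min 0 d \<le> t" "t \<le> max 0 d" for t
      unfolding h_def
      by (rule partial_deriv_at) (use diff kp box inb[OF that] in auto)
    from mvt_between[of d h, OF this]
    obtain \<tau> where \<tau>: "min 0 d \<le> \<tau>" "\<tau> \<le> max 0 d"
      "h d - h 0 = d * partial f i k ((w k)(k := w k k + \<tau>))" by auto
    have hd: "h d = f (w (Suc k)) i"
    proof -
      have "(w k)(k := w k k + d) = w (Suc k)" unfolding w_def d_def by (auto simp: fun_eq_iff)
      then show ?thesis unfolding h_def by simp
    qed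
    have h0: "h 0 = f (w k) i" unfolding h_def by simp
    define \<xi>' where "\<xi>' = \<xi>(k := (w k)(k := w k k + \<tau>))"
    show ?case
    proof (intro exI[of _ \<xi>'] conjI allI impI)
      fix j assume "j < Suc k"
      then show "inbox p c r (\<xi>' j)" unfolding \<xi>'_def using \<xi>(1) inb[OF \<tau>(1,2)]
        by (cases "j = k") auto
    next
      have "(\<Sum>j<Suc k. partial f i j (\<xi>' j) * (b j - a j)) =
            (\<Sum>j<k. partial f i j (\<xi> j) * (b j - a j)) + partial f i k ((w k)(k := w k k + \<tau>)) * d"
        unfolding \<xi>'_def d_def by (simp add: lessThan_Suc)
      then show "f (w (Suc k)) i - f a i = (\<Sum>j<Suc k. partial f i j (\<xi>' j) * (b j - a j))"
        using \<xi>(2) \<tau>(3) hd h0 by (simp add: algebra_simps)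
    qed
  qed
  from this[of p] obtain \<xi> where "(\<forall>j<p. inbox p c r (\<xi> j))"
      "f (w p) i - f a i = (\<Sum>j<p. partial f i j (\<xi> j) * (b j - a j))" by auto
  moreover have "w p = b" unfolding w_def using a0 b0 by (auto simp: fun_eq_iff)
  ultimately show ?thesis by auto
qed

lemma concat_in:
  assumes "s \<in> topspace (Euclidean_space n)" "y \<in> topspace (Euclidean_space m)"
  shows "concat_vec n s y \<in> topspace (Euclidean_space (n+m))"
  using assms by (auto simp: topspace_Euclidean_space concat_vec_def)

lemma concat_inbox:
  assumes "s \<in> topspace (Euclidean_space n)" "y \<in> topspace (Euclidean_space m)"
    "\<forall>i<n. \<bar>s i\<bar> \<le> r" "\<forall>j<m. \<bar>y j - y0 j\<bar> \<le> r"
  shows "inbox (n+m) (concat_vec n (\<lambda>i. 0) y0) r (concat_vec n s y)"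
  unfolding inbox_def
proof (intro conjI allI impI concat_in assms(1,2))
  fix l assume "l < n+m"
  then show "\<bar>concat_vec n s y l - concat_vec n (\<lambda>i. 0) y0 l\<bar> \<le> r"
    using assms(3,4) by (cases "l < n") (auto simp: concat_vec_def)
qed

lemma core_f:
  fixes f :: "(nat\<Rightarrow>real) \<Rightarrow> (nat\<Rightarrow>real)"
  assumes C1: "C1_on (n+m) n S f"
    and hS: "\<exists>r>0. \<forall>z\<in>topspace (Euclidean_space (n+m)).
               (\<forall>l<n+m. \<bar>z l - concat_vec n (\<lambda>i. 0) y0 l\<bar> < r) \<longrightarrow> z \<in> S"
    and y0: "y0 \<in> topspace (Euclidean_space m)"
    and det: "det_n n (\<lambda>i j. partial f i j (concat_vec n (\<lambda>i. 0) y0)) \<noteq> 0"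
    and mn: "m < n"
  shows "\<exists>r>0. \<forall>\<epsilon>>0. \<exists>s\<in>topspace (Euclidean_space n). (\<forall>i<n. \<bar>s i\<bar> < \<epsilon>) \<and>
     (\<forall>y\<in>topspace (Euclidean_space m). (\<forall>j<m. \<bar>y j - y0 j\<bar> \<le> r) \<longrightarrow> f (concat_vec n s y) \<noteq> (\<lambda>i. 0))"
proof -
  define p where "p = n + m"
  define z0 where "z0 = concat_vec n (\<lambda>i. 0) y0"
  define Mm where "Mm i j = partial f i j z0" for i j
  obtain \<beta> where \<beta>: "\<beta> > 0" "\<forall>v T. (\<forall>k<n. \<bar>\<Sum>j<n. Mm k j * v j\<bar> \<le> T) \<longrightarrow> (\<forall>i<n. \<bar>v i\<bar> \<le> \<beta> * T)"
    using det_n_bound[OF det] unfolding Mm_def z0_def by blast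
  have n0: "n > 0" using mn by auto
  define \<eta> where "\<eta> = 1 / (2 * \<beta> * n)"
  have \<eta>: "\<eta> > 0" unfolding \<eta>_def using \<beta> n0 by auto
  have \<beta>\<eta>: "\<beta> * n * \<eta> = 1/2" unfolding \<eta>_def using \<beta> n0 by (simp add: field_simps)
  have z0top: "z0 \<in> topspace (Euclidean_space p)" unfolding z0_def p_def
    by (rule concat_in) (use y0 in \<open>auto simp: topspace_Euclidean_space\<close>)
  obtain rS where rS: "rS > 0" "\<forall>z\<in>topspace (Euclidean_space p). (\<forall>l<p. \<bar>z l - z0 l\<bar> < rS) \<longrightarrow> z \<in> S"
    using hS unfolding p_def z0_def by blast
  have z0S: "z0 \<in> S" using rS z0top by auto
  have C1': "\<forall>i<n. \<forall>j<p. (\<forall>a\<in>S. partial_diffble f i j a) \<and>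
        continuous_map (subtopology (Euclidean_space p) S) euclideanreal (partial f i j)"
    using C1 unfolding C1_on_def p_def .
  have diff: "\<forall>i<n. \<forall>j<p. \<forall>a\<in>S. partial_diffble f i j a"
    using C1' by simp
  define P where "P ij r \<longleftrightarrow> (\<forall>z\<in>topspace (Euclidean_space p). (\<forall>l<p. \<bar>z l - z0 l\<bar> < r) \<longrightarrow>
          z \<in> S \<and> \<bar>partial f (fst ij) (snd ij) z - Mm (fst ij) (snd ij)\<bar> < \<eta>)" for ij r
  have exP: "\<forall>ij\<in>{..<n}\<times>{..<p}. \<exists>r>0. P ij r"
    unfolding P_def
  proof
    fix ij assume ij: "ij \<in> {..<n}\<times>{..<p}"
    obtain i j where ij': "ij = (i,j)" "i < n" "j < p" using ij by auto
    have cm: "continuous_map (subtopology (Euclidean_space p) S) euclideanreal (partial f i j)"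
      using C1' ij' by simp
    have "openin (subtopology (Euclidean_space p) S)
         {z \<in> topspace (subtopology (Euclidean_space p) S). partial f i j z \<in> ball (Mm i j) \<eta>}"
      by (rule openin_continuous_map_preimage[OF cm]) auto
    then obtain T where T: "openin (Euclidean_space p) T"
      "{z \<in> topspace (subtopology (Euclidean_space p) S). partial f i j z \<in> ball (Mm i j) \<eta>} = T \<inter> S"
      unfolding openin_subtopology by blast
    have "z0 \<in> {z \<in> topspace (subtopology (Euclidean_space p) S). partial f i j z \<in> ball (Mm i j) \<eta>}"
      using z0S z0top \<eta> by (simp add: Mm_def)
    then have "z0 \<in> T" using T(2) by blast
    from box_lemma[OF T(1) this] obtain r1 where r1: "r1 > 0"
      "\<forall>z\<in>topspace (Euclidean_space p). (\<forall>l<p. \<bar>z l - z0 l\<bar> < r1) \<longrightarrow> z \<in> T" by blast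
    show "\<exists>r>0. \<forall>z\<in>topspace (Euclidean_space p). (\<forall>l<p. \<bar>z l - z0 l\<bar> < r) \<longrightarrow>
          z \<in> S \<and> \<bar>partial f (fst ij) (snd ij) z - Mm (fst ij) (snd ij)\<bar> < \<eta>"
    proof (intro exI[of _ "min r1 rS"] conjI ballI impI)
      fix z assume z: "z \<in> topspace (Euclidean_space p)" "\<forall>l<p. \<bar>z l - z0 l\<bar> < min r1 rS"
      have "\<forall>l<p. \<bar>z l - z0 l\<bar> < rS" "\<forall>l<p. \<bar>z l - z0 l\<bar> < r1" using z(2) by auto
      then have zS: "z \<in> S" and zT: "z \<in> T" using r1(2) rS(2) z(1) by blast+
      then have "z \<in> {z \<in> topspace (subtopology (Euclidean_space p) S). partial f i j z \<in> ball (Mm i j) \<eta>}"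
        using T(2) by blast
      then show "z \<in> S" "\<bar>partial f (fst ij) (snd ij) z - Mm (fst ij) (snd ij)\<bar> < \<eta>"
        using zS ij' by (auto simp: dist_real_def abs_minus_commute)
    qed (use r1(1) rS(1) in simp)
  qed
  have fin: "finite ({..<n}\<times>{..<p})" by simp
  have mono: "P ij r'" if "P ij r" "0 < r'" "r' \<le> r" for ij r r'
    using that unfolding P_def by (meson order_less_le_trans)
  have "\<exists>r>0. \<forall>ij\<in>{..<n}\<times>{..<p}. P ij r" by (rule finite_pos_min[OF fin exP mono])
  then obtain r1 where r1: "r1 > 0" "\<forall>ij\<in>{..<n}\<times>{..<p}. P ij r1" by (elim exE conjE) 

  define r where "r = r1 / 2"
  have r: "r > 0" using r1(1) unfolding r_def by simp
  have near: "z \<in> S \<and> \<bar>partial f i j z - Mm i j\<bar> < \<eta>" if z: "inbox p z0 r z" and ij: "i < n" "j < p" for i j z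
  proof -
    have "(i,j) \<in> {..<n}\<times>{..<p}" using ij by simp
    then have "P (i,j) r1" using r1(2) by blast
    then have H: "\<forall>z\<in>topspace (Euclidean_space p). (\<forall>l<p. \<bar>z l - z0 l\<bar> < r1) \<longrightarrow>
          z \<in> S \<and> \<bar>partial f i j z - Mm i j\<bar> < \<eta>" unfolding P_def by simp
    have zt: "z \<in> topspace (Euclidean_space p)" using z unfolding inbox_def by blast
    have "\<forall>l<p. \<bar>z l - z0 l\<bar> < r1"
    proof (intro allI impI)
      fix l assume "l < p"
      then have "\<bar>z l - z0 l\<bar> \<le> r1/2" using z unfolding inbox_def r_def by blast
      then show "\<bar>z l - z0 l\<bar> < r1" using r1(1) by linarith
    qed
    then show ?thesis using H zt by blast
  qed
  have p0: "0 < p" using n0 unfolding p_def by simp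
  have boxS: "\<forall>z. inbox p z0 r z \<longrightarrow> z \<in> S"
  proof (intro allI impI)
    fix z assume "inbox p z0 r z"
    from near[OF this n0 p0] show "z \<in> S" by blast
  qed
  define Mx where "Mx = (\<Sum>i<n. \<Sum>j<p. \<bar>Mm i j\<bar>)"
  have Mxb: "\<bar>partial f i j z\<bar> \<le> Mx + \<eta>" if "inbox p z0 r z" "i < n" "j < p" for i j z
  proof -
    have "\<bar>Mm i j\<bar> \<le> (\<Sum>j<p. \<bar>Mm i j\<bar>)" using that(3) by (intro member_le_sum) auto
    also have "\<dots> \<le> Mx" unfolding Mx_def using that(2) by (intro member_le_sum[of i "{..<n}"]) (auto intro: sum_nonneg)
    finally have "\<bar>Mm i j\<bar> \<le> Mx" .
    moreover have "\<bar>partial f i j z - Mm i j\<bar> < \<eta>" using near[OF that] by blast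
    ultimately show ?thesis by linarith
  qed
  define K where "K = 2 * \<beta> * p * (Mx + \<eta>) + 1"
  have Mx0: "Mx \<ge> 0" unfolding Mx_def by (auto intro: sum_nonneg)
  have "2 * \<beta> * p * (Mx + \<eta>) \<ge> 0" using \<beta>(1) \<eta> Mx0 by simp
  then have K: "K > 0" unfolding K_def by linarith
  have LC: "\<forall>i<n. \<bar>s1 i - s2 i\<bar> \<le> K * t"
    if s1: "s1 \<in> topspace (Euclidean_space n)" "\<forall>i<n. \<bar>s1 i\<bar> \<le> r"
      and s2: "s2 \<in> topspace (Euclidean_space n)" "\<forall>i<n. \<bar>s2 i\<bar> \<le> r"
      and y1: "y1 \<in> topspace (Euclidean_space m)" "\<forall>j<m. \<bar>y1 j - y0 j\<bar> \<le> r"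
      and y2: "y2 \<in> topspace (Euclidean_space m)" "\<forall>j<m. \<bar>y2 j - y0 j\<bar> \<le> r"
      and f1: "f (concat_vec n s1 y1) = (\<lambda>i. 0)" and f2: "f (concat_vec n s2 y2) = (\<lambda>i. 0)"
      and t: "t \<ge> 0" "\<forall>j<m. \<bar>y1 j - y2 j\<bar> \<le> t"
    for s1 s2 y1 y2 t
  proof -
    define za where "za = concat_vec n s1 y2"
    define zb where "zb = concat_vec n s2 y2"
    define zc where "zc = concat_vec n s1 y1"
    have iza: "inbox p z0 r za" unfolding za_def p_def z0_def by (rule concat_inbox) (use s1 y2 in auto)
    have izb: "inbox p z0 r zb" unfolding zb_def p_def z0_def by (rule concat_inbox) (use s2 y2 in auto)
    have izc: "inbox p z0 r zc" unfolding zc_def p_def z0_def by (rule concat_inbox) (use s1 y1 in auto)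
    define ds where "ds i = s1 i - s2 i" for i
    define D where "D = Max ((\<lambda>i. \<bar>ds i\<bar>) ` {..<n})"
    have Dge: "\<bar>ds i\<bar> \<le> D" if "i < n" for i unfolding D_def using that by (intro Max_ge) auto
    have "D \<in> (\<lambda>i. \<bar>ds i\<bar>) ` {..<n}" unfolding D_def using n0 by (intro Max_in) auto
    then obtain i0 where i0: "i0 < n" "D = \<bar>ds i0\<bar>" by auto
    have zab: "za j - zb j = (if j < n then ds j else 0)" for j
      unfolding za_def zb_def ds_def concat_vec_def by auto
    have zac: "\<bar>za j - zc j\<bar> \<le> t" if "j < p" for j
    proof (cases "j < n")
      case True then show ?thesis unfolding za_def zc_def concat_vec_def using t(1) by simp
    next
      case False
      then have "j - n < m" using that unfolding p_def by simp
      then show ?thesis unfolding za_def zc_def concat_vec_def using False t(2)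
        by (simp add: abs_minus_commute)
    qed
    have est: "\<bar>\<Sum>j<n. Mm k j * ds j\<bar> \<le> p * (Mx + \<eta>) * t + n * \<eta> * D" if k: "k < n" for k
    proof -
      have diffk: "\<forall>j<p. \<forall>a\<in>S. partial_diffble f k j a" using diff k by blast
      obtain \<xi> where \<xi>: "\<forall>j<p. inbox p z0 r (\<xi> j)"
        "f za k - f zb k = (\<Sum>j<p. partial f k j (\<xi> j) * (za j - zb j))"
        using stair[OF boxS diffk izb iza] by blast
      obtain \<xi>' where \<xi>': "\<forall>j<p. inbox p z0 r (\<xi>' j)"
        "f za k - f zc k = (\<Sum>j<p. partial f k j (\<xi>' j) * (za j - zc j))"
        using stair[OF boxS diffk izc iza] by blast
      have "(\<Sum>j<p. partial f k j (\<xi> j) * (za j - zb j)) = (\<Sum>j<p. partial f k j (\<xi> j) * (if j < n then ds j else 0))"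
        using zab by simp
      also have "\<dots> = (\<Sum>j<n. partial f k j (\<xi> j) * (if j < n then ds j else 0))"
        by (rule sum.mono_neutral_right) (auto simp: p_def)
      also have "\<dots> = (\<Sum>j<n. partial f k j (\<xi> j) * ds j)" by simp
      finally have e1: "f za k - f zb k = (\<Sum>j<n. partial f k j (\<xi> j) * ds j)" using \<xi>(2) by simp
      have "\<bar>f za k - f zc k\<bar> \<le> (\<Sum>j<p. \<bar>partial f k j (\<xi>' j) * (za j - zc j)\<bar>)"
        unfolding \<xi>'(2) by (rule sum_abs)
      also have "\<dots> \<le> (\<Sum>j<p. (Mx + \<eta>) * t)"
      proof (rule sum_mono)
        fix j assume "j \<in> {..<p}"
        then have j: "j < p" by simp
        have "\<bar>partial f k j (\<xi>' j) * (za j - zc j)\<bar> = \<bar>partial f k j (\<xi>' j)\<bar> * \<bar>za j - zc j\<bar>"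
          by (simp add: abs_mult)
        also have "\<dots> \<le> (Mx + \<eta>) * t"
          using Mxb[OF _ k j] \<xi>'(1) j zac[OF j] Mx0 \<eta> by (intro mult_mono) auto
        finally show "\<bar>partial f k j (\<xi>' j) * (za j - zc j)\<bar> \<le> (Mx + \<eta>) * t" .
      qed
      also have "\<dots> = p * (Mx + \<eta>) * t" by simp
      finally have e2: "\<bar>f za k - f zc k\<bar> \<le> p * (Mx + \<eta>) * t" .
      have "f zb k = 0" "f zc k = 0" using f1 f2 unfolding zb_def zc_def by auto
      then have e3: "\<bar>\<Sum>j<n. partial f k j (\<xi> j) * ds j\<bar> \<le> p * (Mx + \<eta>) * t" using e1 e2 by simp
      have "\<bar>\<Sum>j<n. (Mm k j - partial f k j (\<xi> j)) * ds j\<bar> \<le> (\<Sum>j<n. \<bar>(Mm k j - partial f k j (\<xi> j)) * ds j\<bar>)"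
        by (rule sum_abs)
      also have "\<dots> \<le> (\<Sum>j<n. \<eta> * D)"
      proof (rule sum_mono)
        fix j assume "j \<in> {..<n}"
        then have j: "j < n" by simp
        then have jp: "j < p" unfolding p_def by simp
        have "\<bar>(Mm k j - partial f k j (\<xi> j)) * ds j\<bar> = \<bar>partial f k j (\<xi> j) - Mm k j\<bar> * \<bar>ds j\<bar>"
          by (simp add: abs_mult abs_minus_commute)
        also have "\<dots> \<le> \<eta> * D"
        proof (rule mult_mono)
          show "\<bar>partial f k j (\<xi> j) - Mm k j\<bar> \<le> \<eta>" using near[OF _ k jp, of "\<xi> j"] \<xi>(1) jp by force
        qed (use Dge[OF j] \<eta> in auto)
        finally show "\<bar>(Mm k j - partial f k j (\<xi> j)) * ds j\<bar> \<le> \<eta> * D" .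
      qed
      also have "\<dots> = n * \<eta> * D" by simp
      finally have e4: "\<bar>\<Sum>j<n. (Mm k j - partial f k j (\<xi> j)) * ds j\<bar> \<le> n * \<eta> * D" .
      have "(\<Sum>j<n. Mm k j * ds j) = (\<Sum>j<n. partial f k j (\<xi> j) * ds j) + (\<Sum>j<n. (Mm k j - partial f k j (\<xi> j)) * ds j)"
        by (simp add: sum.distrib[symmetric] algebra_simps)
      then show ?thesis using e3 e4 by linarith
    qed
    have "\<forall>i<n. \<bar>ds i\<bar> \<le> \<beta> * (p * (Mx + \<eta>) * t + n * \<eta> * D)"
      using \<beta>(2) est by blast
    then have "D \<le> \<beta> * (p * (Mx + \<eta>) * t + n * \<eta> * D)" using i0 by simp
    also have "\<dots> = \<beta> * p * (Mx + \<eta>) * t + (\<beta> * n * \<eta>) * D" by (simp add: algebra_simps)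
    also have "\<dots> = \<beta> * p * (Mx + \<eta>) * t + D / 2" using \<beta>\<eta> by simp
    finally have "D \<le> 2 * \<beta> * p * (Mx + \<eta>) * t" by simp
    also have "\<dots> \<le> K * t" unfolding K_def using t(1) by (simp add: algebra_simps)
    finally have DK: "D \<le> K * t" .
    show ?thesis using Dge DK unfolding ds_def by (meson order_trans)
  qed

  show ?thesis
  proof (intro exI[of _ r] conjI r allI impI)
    fix \<epsilon> :: real assume \<epsilon>: "\<epsilon> > 0"
    show "\<exists>s\<in>topspace (Euclidean_space n). (\<forall>i<n. \<bar>s i\<bar> < \<epsilon>) \<and>
     (\<forall>y\<in>topspace (Euclidean_space m). (\<forall>j<m. \<bar>y j - y0 j\<bar> \<le> r) \<longrightarrow> f (concat_vec n s y) \<noteq> (\<lambda>i. 0))"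
    proof (rule ccontr)
      assume H0: "\<not> ?thesis"
      have H: "\<exists>y. y \<in> topspace (Euclidean_space m) \<and> (\<forall>j<m. \<bar>y j - y0 j\<bar> \<le> r) \<and> f (concat_vec n s y) = (\<lambda>i. 0)"
        if "s \<in> topspace (Euclidean_space n)" "\<forall>i<n. \<bar>s i\<bar> < \<epsilon>" for s
        using H0 that by blast
      define e where "e = min \<epsilon> r / 2"
      have e: "e > 0" "e < \<epsilon>" "e \<le> r" unfolding e_def using \<epsilon> r by auto
      define c where "c = 4 * r * K / e + 1"
      have c: "c \<ge> 1" unfolding c_def using r K e by simp
      define N :: nat where "N = nat \<lceil>c ^ m\<rceil> + 1"
      have N1: "N \<ge> 1" unfolding N_def by simp
      have Nc: "real N > c ^ m" unfolding N_def by linarith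
      define t where "t = e / (2 * K * N)"
      have t: "t > 0" unfolding t_def using e K N1 by simp
      define Q :: nat where "Q = nat \<lfloor>2 * r / t\<rfloor> + 1"
      define gs where "gs k = (\<lambda>i. if i < n then e * real (k i) / real N else 0)" for k :: "nat \<Rightarrow> nat"
      define Kset where "Kset = PiE {..<n} (\<lambda>_. {..<N})"
      define Bset where "Bset = PiE {..<m} (\<lambda>_. {..<Q})"
      have gs_top: "gs k \<in> topspace (Euclidean_space n)" for k
        unfolding gs_def topspace_Euclidean_space by auto
      have gs_small: "\<bar>gs k i\<bar> < \<epsilon> \<and> \<bar>gs k i\<bar> \<le> r" if "k \<in> Kset" "i < n" for k i
      proof -
        have "k i < N" using that unfolding Kset_def by auto
        then have "real (k i) / real N < 1" using N1 by simp
        then have "e * (real (k i) / real N) < e * 1" using e(1) by (intro mult_strict_left_mono) auto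
        then have "\<bar>gs k i\<bar> < e" unfolding gs_def using that(2) e(1) by simp
        then show ?thesis using e by auto
      qed
      define yw where "yw k = (SOME y. y \<in> topspace (Euclidean_space m) \<and> (\<forall>j<m. \<bar>y j - y0 j\<bar> \<le> r) \<and>
          f (concat_vec n (gs k) y) = (\<lambda>i. 0))" for k
      have yw: "yw k \<in> topspace (Euclidean_space m) \<and> (\<forall>j<m. \<bar>yw k j - y0 j\<bar> \<le> r) \<and>
          f (concat_vec n (gs k) (yw k)) = (\<lambda>i. 0)" if "k \<in> Kset" for k
      proof -
        have ex: "\<exists>y. y \<in> topspace (Euclidean_space m) \<and> (\<forall>j<m. \<bar>y j - y0 j\<bar> \<le> r) \<and>
          f (concat_vec n (gs k) y) = (\<lambda>i. 0)" by (rule H) (use gs_top gs_small that in auto)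
        from someI_ex[OF ex] show ?thesis unfolding yw_def .
      qed
      define bx where "bx y = restrict (\<lambda>j. nat \<lfloor>(y j - y0 j + r) / t\<rfloor>) {..<m}" for y :: "nat \<Rightarrow> real"
      have maps: "(bx \<circ> yw) ` Kset \<subseteq> Bset"
      proof
        fix b assume "b \<in> (bx \<circ> yw) ` Kset"
        then obtain k where k: "k \<in> Kset" "b = bx (yw k)" by auto
        have "nat \<lfloor>(yw k j - y0 j + r) / t\<rfloor> < Q" if "j < m" for j
        proof -
          have "\<bar>yw k j - y0 j\<bar> \<le> r" using yw[OF k(1)] that by blast
          then have "(yw k j - y0 j + r) / t \<le> 2 * r / t" using t by (intro divide_right_mono) auto
          then have "\<lfloor>(yw k j - y0 j + r) / t\<rfloor> \<le> \<lfloor>2 * r / t\<rfloor>" by (rule floor_mono)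
          then show ?thesis unfolding Q_def by linarith
        qed
        then show "b \<in> Bset" unfolding k(2) bx_def Bset_def by auto
      qed
      have inj: "inj_on (bx \<circ> yw) Kset"
      proof (rule inj_onI)
        fix k1 k2 assume k1: "k1 \<in> Kset" and k2: "k2 \<in> Kset" and eq: "(bx \<circ> yw) k1 = (bx \<circ> yw) k2"
        have close: "\<bar>yw k1 j - yw k2 j\<bar> \<le> t" if j: "j < m" for j
        proof -
          have "bx (yw k1) j = bx (yw k2) j" using eq by simp
          then have "nat \<lfloor>(yw k1 j - y0 j + r) / t\<rfloor> = nat \<lfloor>(yw k2 j - y0 j + r) / t\<rfloor>"
            unfolding bx_def using j by simp
          moreover have "(yw k1 j - y0 j + r) / t \<ge> 0" "(yw k2 j - y0 j + r) / t \<ge> 0"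
            using yw[OF k1] yw[OF k2] j t by (auto intro!: divide_nonneg_pos)
          ultimately have "\<lfloor>(yw k1 j - y0 j + r) / t\<rfloor> = \<lfloor>(yw k2 j - y0 j + r) / t\<rfloor>"
            by (metis eq_nat_nat_iff zero_le_floor)
          then have "\<bar>(yw k1 j - y0 j + r) / t - (yw k2 j - y0 j + r) / t\<bar> < 1"
            by (smt (verit, ccfv_threshold) floor_eq_iff)
          moreover have "(yw k1 j - y0 j + r) / t - (yw k2 j - y0 j + r) / t = (yw k1 j - yw k2 j) / t"
            by (simp add: diff_divide_distrib[symmetric])
          ultimately have "\<bar>(yw k1 j - yw k2 j) / t\<bar> < 1" by simp
          then have "\<bar>yw k1 j - yw k2 j\<bar> < t" using t by (simp add: abs_divide)
          then show ?thesis by simp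
        qed
        have L: "\<forall>i<n. \<bar>gs k1 i - gs k2 i\<bar> \<le> K * t"
          by (rule LC[of "gs k1" "gs k2" "yw k1" "yw k2" t]) (use gs_top gs_small k1 k2 yw[OF k1] yw[OF k2] t close in auto)
        have "k1 i = k2 i" if i: "i < n" for i
        proof (rule ccontr)
          assume ne: "k1 i \<noteq> k2 i"
          then have "\<bar>real (k1 i) - real (k2 i)\<bar> \<ge> 1" by linarith
          then have "e / N * 1 \<le> e / N * \<bar>real (k1 i) - real (k2 i)\<bar>" using e N1 by (intro mult_left_mono) auto
          also have "\<dots> = \<bar>gs k1 i - gs k2 i\<bar>" unfolding gs_def using i e N1
            by (simp add: abs_mult diff_divide_distrib[symmetric] right_diff_distrib[symmetric])
          also have "\<dots> \<le> K * t" using L i by blast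
          also have "\<dots> = e / (2 * N)" unfolding t_def using K by simp
          finally show False using e N1 by (simp add: field_simps)
        qed
        then show "k1 = k2" using k1 k2 unfolding Kset_def by (intro PiE_ext) auto
      qed
      have "card Kset \<le> card Bset" by (rule card_inj_on_le[OF inj maps]) (simp add: Bset_def finite_PiE)
      then have NQ: "N ^ n \<le> Q ^ m" by (simp add: Kset_def Bset_def card_PiE)
      have "real Q \<le> 2 * r / t + 1" unfolding Q_def using r t by (simp add: of_nat_nat)
      also have "2 * r / t = 4 * r * K * N / e" unfolding t_def using e K N1 by (simp add: field_simps)
      also have "4 * r * K * N / e + 1 \<le> c * N" unfolding c_def using N1 by (simp add: field_simps)
      finally have Qb: "real Q \<le> c * N" .
      have "real (N ^ n) \<le> real (Q ^ m)" using NQ by linarith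
      also have "\<dots> = real Q ^ m" by simp
      also have "\<dots> \<le> (c * N) ^ m" by (rule power_mono[OF Qb]) simp
      also have "\<dots> = c ^ m * real N ^ m" by (simp add: power_mult_distrib)
      also have "\<dots> < real N * real N ^ m" using Nc N1 by (intro mult_strict_right_mono) auto
      also have "\<dots> = real N ^ Suc m" by simp
      also have "\<dots> \<le> real N ^ n" using N1 mn by (intro power_increasing) auto
      finally show False by simp
    qed
  qed
qed

lemma det_n_cong:
  assumes "\<And>i j. i < n \<Longrightarrow> j < n \<Longrightarrow> M i j = M' i j"
  shows "det_n n M = det_n n M'"
  unfolding det_n_def
proof (intro sum.cong refl arg_cong2[where f="(*)"] prod.cong)
  fix \<sigma> i assume "\<sigma> \<in> {\<sigma>. \<sigma> permutes {..<n}}" "i \<in> {..<n}"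
  then show "M i (\<sigma> i) = M' i (\<sigma> i)" using assms permutes_in_image[of \<sigma> "{..<n}" i] by auto
qed

lemma open_box_Eucl:
  "openin (Euclidean_space m) {y \<in> topspace (Euclidean_space m). \<forall>j<m. \<bar>y j - y0 j\<bar> < r}"
proof -
  have "open {f::nat\<Rightarrow>real. \<forall>i\<in>{..<m}. f (id i) \<in> ball (y0 i) r}"
    by (rule product_topology_basis') auto
  then have op: "openin (powertop_real UNIV) {f::nat\<Rightarrow>real. \<forall>i\<in>{..<m}. f (id i) \<in> ball (y0 i) r}"
    by (simp add: euclidean_product_topology)
  have "{y \<in> topspace (Euclidean_space m). \<forall>j<m. \<bar>y j - y0 j\<bar> < r} =
        {f::nat\<Rightarrow>real. \<forall>i\<in>{..<m}. f (id i) \<in> ball (y0 i) r} \<inter> {x. \<forall>i\<ge>m. x i = 0}"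
    by (auto simp: topspace_Euclidean_space dist_real_def abs_minus_commute)
  then show ?thesis unfolding Euclidean_space_def openin_subtopology using op by blast
qed

lemma slice_local:
  assumes atlas: "C1_atlas X m A" and sl: "slice_across G X m A H g0 x0 n U V \<Phi>" and mn: "m < n"
  shows "\<exists>N. openin X N \<and> x0 \<in> N \<and> N \<subseteq> V \<and>
           (\<forall>\<epsilon>>0. \<exists>s\<in>U. (\<forall>i<n. \<bar>s i\<bar> < \<epsilon>) \<and> (\<forall>x\<in>N. \<Phi> s x \<noteq> (\<lambda>i. 0)))"
proof -
  have U: "openin (Euclidean_space n) U" and U0: "(\<lambda>i. 0) \<in> U" and V: "openin X V" and x0V: "x0 \<in> V"
    and C1p: "C1_on_prod X m A n n U V \<Phi>"
    and det: "det_n n (\<lambda>i j. partial (\<lambda>s. \<Phi> s x0) i j (\<lambda>i. 0)) \<noteq> 0"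
    using sl unfolding slice_across_def by blast+
  have "x0 \<in> topspace X" using V x0V openin_subset by blast
  then obtain c where cA: "c \<in> A" and x0W: "x0 \<in> fst c" using atlas unfolding C1_atlas_def by blast
  define W where "W = fst c"
  define \<phi> where "\<phi> = snd c"
  have ch: "chart X m c" using atlas cA unfolding C1_atlas_def by blast
  have W: "openin X W" and \<phi>W: "openin (Euclidean_space m) (\<phi> ` W)"
    and hom: "homeomorphic_map (subtopology X W) (subtopology (Euclidean_space m) (\<phi> ` W)) \<phi>"
    using ch unfolding chart_def W_def \<phi>_def by blast+
  have Wsub: "W \<subseteq> topspace X" using W openin_subset by blast
  have injW: "inj_on \<phi> W" using homeomorphic_imp_injective_map[OF hom] Wsub
    by (simp add: Int_absorb1)
  have \<phi>Eucl: "\<phi> x \<in> topspace (Euclidean_space m)" if "x \<in> W" for x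
    using \<phi>W openin_subset that by blast
  have VW: "V \<inter> W \<subseteq> topspace (subtopology X W)" using Wsub by auto
  have "openin (subtopology X W) (V \<inter> W)"
    unfolding openin_subtopology using V by blast
  then have "openin (subtopology (Euclidean_space m) (\<phi> ` W)) (\<phi> ` (V \<inter> W))"
    using homeomorphic_map_openness[OF hom VW] by blast
  then have \<phi>VW: "openin (Euclidean_space m) (\<phi> ` (V \<inter> W))"
    using openin_trans_full \<phi>W by blast
  define y0 where "y0 = \<phi> x0"
  have y0: "y0 \<in> topspace (Euclidean_space m)" unfolding y0_def using \<phi>Eucl x0W W_def by blast
  have y0VW: "y0 \<in> \<phi> ` (V \<inter> W)" unfolding y0_def using x0V x0W W_def by blast
  obtain rV where rV: "rV > 0" "\<forall>z\<in>topspace (Euclidean_space m). (\<forall>l<m. \<bar>z l - y0 l\<bar> < rV) \<longrightarrow> z \<in> \<phi> ` (V \<inter> W)"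
    using box_lemma[OF \<phi>VW y0VW] by blast
  obtain rU where rU: "rU > 0" "\<forall>z\<in>topspace (Euclidean_space n). (\<forall>l<n. \<bar>z l - 0\<bar> < rU) \<longrightarrow> z \<in> U"
    using box_lemma[OF U U0] by blast
  define f where "f z = \<Phi> (\<lambda>i. if i < n then z i else 0) (inv_into W \<phi> (\<lambda>i. z (n + i)))" for z
  define S where "S = {concat_vec n s y | s y. s \<in> U \<and> y \<in> \<phi> ` (V \<inter> W)}"
  have C1: "C1_on (n+m) n S f" using C1p cA unfolding C1_on_prod_def S_def f_def W_def \<phi>_def by blast
  have hS: "\<exists>r>0. \<forall>z\<in>topspace (Euclidean_space (n+m)).
               (\<forall>l<n+m. \<bar>z l - concat_vec n (\<lambda>i. 0) y0 l\<bar> < r) \<longrightarrow> z \<in> S"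
  proof (intro exI[of _ "min rU rV"] conjI ballI impI)
    show "min rU rV > 0" using rU rV by simp
  next
    fix z assume z: "z \<in> topspace (Euclidean_space (n+m))"
      and zl: "\<forall>l<n+m. \<bar>z l - concat_vec n (\<lambda>i. 0) y0 l\<bar> < min rU rV"
    define s where "s = (\<lambda>i. if i < n then z i else 0)"
    define y where "y = (\<lambda>i. z (n + i))"
    have zeq: "z = concat_vec n s y" unfolding s_def y_def concat_vec_def by auto
    have st: "s \<in> topspace (Euclidean_space n)" unfolding s_def by (auto simp: topspace_Euclidean_space)
    have yt: "y \<in> topspace (Euclidean_space m)" using z unfolding y_def by (auto simp: topspace_Euclidean_space)
    have "\<forall>l<n. \<bar>s l - 0\<bar> < rU"
    proof (intro allI impI)
      fix l assume l: "l < n"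
      then have "\<bar>z l - concat_vec n (\<lambda>i. 0) y0 l\<bar> < min rU rV" using zl by simp
      then show "\<bar>s l - 0\<bar> < rU" using l unfolding s_def concat_vec_def by simp
    qed
    then have sU: "s \<in> U" using rU st by blast
    have "\<forall>l<m. \<bar>y l - y0 l\<bar> < rV"
    proof (intro allI impI)
      fix l assume l: "l < m"
      then have "\<bar>z (n+l) - concat_vec n (\<lambda>i. 0) y0 (n+l)\<bar> < min rU rV" using zl by simp
      then show "\<bar>y l - y0 l\<bar> < rV" unfolding y_def concat_vec_def by simp
    qed
    then have "y \<in> \<phi> ` (V \<inter> W)" using rV yt by blast
    then show "z \<in> S" unfolding S_def zeq using sU by blast
  qed
  have inv0: "inv_into W \<phi> y0 = x0" unfolding y0_def using injW x0W W_def by simp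
  have pd: "partial f i j (concat_vec n (\<lambda>i. 0) y0) = partial (\<lambda>s. \<Phi> s x0) i j (\<lambda>i. 0)" if "j < n" for i j
  proof -
    have "f ((concat_vec n (\<lambda>i. 0) y0)(j := concat_vec n (\<lambda>i. 0) y0 j + t)) = \<Phi> ((\<lambda>i. 0)(j := 0 + t)) x0" for t
    proof -
      have "(\<lambda>i. if i < n then ((concat_vec n (\<lambda>i. 0) y0)(j := concat_vec n (\<lambda>i. 0) y0 j + t)) i else 0)
           = (\<lambda>i. 0)(j := 0 + t)" using that by (auto simp: concat_vec_def fun_eq_iff)
      moreover have "(\<lambda>i. ((concat_vec n (\<lambda>i. 0) y0)(j := concat_vec n (\<lambda>i. 0) y0 j + t)) (n + i)) = y0"
        using that by (auto simp: concat_vec_def fun_eq_iff)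
      ultimately show ?thesis unfolding f_def using inv0 by simp
    qed
    then show ?thesis unfolding partial_def by simp
  qed
  have det': "det_n n (\<lambda>i j. partial f i j (concat_vec n (\<lambda>i. 0) y0)) \<noteq> 0"
    using det det_n_cong[of n "\<lambda>i j. partial f i j (concat_vec n (\<lambda>i. 0) y0)" "\<lambda>i j. partial (\<lambda>s. \<Phi> s x0) i j (\<lambda>i. 0)"] pd
    by simp
  obtain r where r: "r > 0" and core: "\<forall>\<epsilon>>0. \<exists>s\<in>topspace (Euclidean_space n). (\<forall>i<n. \<bar>s i\<bar> < \<epsilon>) \<and>
     (\<forall>y\<in>topspace (Euclidean_space m). (\<forall>j<m. \<bar>y j - y0 j\<bar> \<le> r) \<longrightarrow> f (concat_vec n s y) \<noteq> (\<lambda>i. 0))"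
    using core_f[OF C1 hS y0 det' mn] by blast
  define N where "N = {x \<in> topspace (subtopology X (V \<inter> W)). \<phi> x \<in> {y \<in> topspace (Euclidean_space m). \<forall>j<m. \<bar>y j - y0 j\<bar> < r}}"
  have cmW: "continuous_map (subtopology X W) (Euclidean_space m) \<phi>"
    using homeomorphic_imp_continuous_map[OF hom] continuous_map_in_subtopology by blast
  have "continuous_map (subtopology X (V \<inter> W)) (Euclidean_space m) \<phi>"
    using continuous_map_from_subtopology[OF cmW, of "V \<inter> W"] by (simp add: subtopology_subtopology Int_absorb1 inf_commute)
  then have "openin (subtopology X (V \<inter> W)) N"
    unfolding N_def by (rule openin_continuous_map_preimage) (rule open_box_Eucl)
  then have NX: "openin X N" using openin_trans_full V W by blast
  have NV: "N \<subseteq> V \<inter> W" unfolding N_def by auto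
  have "x0 \<in> topspace (subtopology X (V \<inter> W))" using x0V x0W W_def \<open>x0 \<in> topspace X\<close> by simp
  moreover have "\<phi> x0 \<in> {y \<in> topspace (Euclidean_space m). \<forall>j<m. \<bar>y j - y0 j\<bar> < r}"
    using y0 r unfolding y0_def by simp
  ultimately have x0N: "x0 \<in> N" unfolding N_def by blast
  show ?thesis
  proof (intro exI[of _ N] conjI NX x0N allI impI)
    show "N \<subseteq> V" using NV by blast
  next
    fix \<epsilon> :: real assume \<epsilon>: "\<epsilon> > 0"
    obtain s where s: "s \<in> topspace (Euclidean_space n)" "\<forall>i<n. \<bar>s i\<bar> < min \<epsilon> rU"
      "\<forall>y\<in>topspace (Euclidean_space m). (\<forall>j<m. \<bar>y j - y0 j\<bar> \<le> r) \<longrightarrow> f (concat_vec n s y) \<noteq> (\<lambda>i. 0)"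
    proof -
      have "min \<epsilon> rU > 0" using \<epsilon> rU(1) by simp
      from core[rule_format, OF this] show ?thesis using that by blast
    qed
    have "\<forall>l<n. \<bar>s l - 0\<bar> < rU" using s(2) by simp
    then have sU: "s \<in> U" using rU(2) s(1) by blast
    show "\<exists>s\<in>U. (\<forall>i<n. \<bar>s i\<bar> < \<epsilon>) \<and> (\<forall>x\<in>N. \<Phi> s x \<noteq> (\<lambda>i. 0))"
    proof (intro bexI[OF _ sU] conjI ballI allI impI)
      fix i assume "i < n" then show "\<bar>s i\<bar> < \<epsilon>" using s(2) by auto
    next
      fix x assume xN: "x \<in> N"
      then have xW: "x \<in> W" and yl: "\<forall>j<m. \<bar>\<phi> x j - y0 j\<bar> < r" unfolding N_def by auto
      have "\<forall>j<m. \<bar>\<phi> x j - y0 j\<bar> \<le> r" using yl by (simp add: less_imp_le)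
      then have "f (concat_vec n s (\<phi> x)) \<noteq> (\<lambda>i. 0)"
        using s(3) \<phi>Eucl[OF xW] by blast
      moreover have "f (concat_vec n s (\<phi> x)) = \<Phi> s x"
      proof -
        have "(\<lambda>i. if i < n then concat_vec n s (\<phi> x) i else 0) = s"
          using s(1) by (auto simp: concat_vec_def fun_eq_iff topspace_Euclidean_space)
        moreover have "(\<lambda>i. concat_vec n s (\<phi> x) (n + i)) = \<phi> x" by (auto simp: concat_vec_def)
        ultimately show ?thesis unfolding f_def using injW xW by simp
      qed
      ultimately show "\<Phi> s x \<noteq> (\<lambda>i. 0)" by simp
    qed
  qed
qed

lemma manifold_locally_compact:
  assumes "C1_atlas X m A"
  shows "locally_compact_space X"
  unfolding locally_compact_space_def
proof
  fix x assume x: "x \<in> topspace X"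
  then obtain c where cA: "c \<in> A" and xW: "x \<in> fst c" using assms unfolding C1_atlas_def by blast
  have ch: "chart X m c" using assms cA unfolding C1_atlas_def by blast
  have W: "openin X (fst c)" and \<phi>W: "openin (Euclidean_space m) (snd c ` fst c)"
    and hom: "homeomorphic_map (subtopology X (fst c)) (subtopology (Euclidean_space m) (snd c ` fst c)) (snd c)"
    using ch unfolding chart_def by blast+
  have "locally_compact_space (subtopology (Euclidean_space m) (snd c ` fst c))"
    by (rule locally_compact_space_open_subset[OF _ locally_compact_Euclidean_space \<phi>W])
       (simp add: Hausdorff_Euclidean_space)
  then have lc: "locally_compact_space (subtopology X (fst c))"
    using homeomorphic_locally_compact_space[OF homeomorphic_map_imp_homeomorphic_space[OF hom]] by blast
  have "x \<in> topspace (subtopology X (fst c))" using x xW by simp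
  then obtain U K where UK: "openin (subtopology X (fst c)) U" "compactin (subtopology X (fst c)) K" "x \<in> U" "U \<subseteq> K"
    using lc unfolding locally_compact_space_def by blast
  show "\<exists>U K. openin X U \<and> compactin X K \<and> x \<in> U \<and> U \<subseteq> K"
    using UK openin_trans_full[OF UK(1) W] compactin_subtopology by blast
qed

lemma compact_family:
  assumes "C1_manifold X m A"
  shows "\<exists>\<L>. countable \<L> \<and> (\<forall>L\<in>\<L>. compactin X L) \<and>
     (\<forall>x N. openin X N \<and> x \<in> N \<longrightarrow> (\<exists>L\<in>\<L>. L \<subseteq> N \<and> (\<exists>B. openin X B \<and> x \<in> B \<and> B \<subseteq> L)))"
proof -
  have H: "Hausdorff_space X" and sc: "second_countable X" and at: "C1_atlas X m A"
    using assms unfolding C1_manifold_def by blast+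
  have nb: "neighbourhood_base_of (compactin X) X"
    using locally_compact_space_neighbourhood_base[of X] H manifold_locally_compact[OF at] by simp
  obtain \<B> where \<B>: "countable \<B>" "\<forall>V\<in>\<B>. openin X V"
    "\<forall>U x. openin X U \<and> x \<in> U \<longrightarrow> (\<exists>V\<in>\<B>. x \<in> V \<and> V \<subseteq> U)"
    using sc unfolding second_countable_def by blast
  define Idx where "Idx = {(B1,B2). B1 \<in> \<B> \<and> B2 \<in> \<B> \<and> (\<exists>L. compactin X L \<and> B1 \<subseteq> L \<and> L \<subseteq> B2)}"
  define Lf where "Lf = (\<lambda>(B1,B2). SOME L. compactin X L \<and> B1 \<subseteq> L \<and> L \<subseteq> B2)"
  have Lf: "compactin X (Lf b) \<and> fst b \<subseteq> Lf b \<and> Lf b \<subseteq> snd b" if bI: "b \<in> Idx" for b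
  proof -
    obtain B1 B2 where b: "b = (B1,B2)" and ex: "\<exists>L. compactin X L \<and> B1 \<subseteq> L \<and> L \<subseteq> B2"
      using bI unfolding Idx_def by (cases b) auto
    from someI_ex[OF ex] show ?thesis unfolding b Lf_def by simp
  qed
  have "countable Idx"
  proof (rule countable_subset[of _ "\<B> \<times> \<B>"])
    show "Idx \<subseteq> \<B> \<times> \<B>" unfolding Idx_def by auto
    show "countable (\<B> \<times> \<B>)" using \<B>(1) by simp
  qed
  then have cL: "countable (Lf ` Idx)" by simp
  show ?thesis
  proof (intro exI[of _ "Lf ` Idx"] conjI cL ballI allI impI)
    fix L assume "L \<in> Lf ` Idx"
    then obtain b where "b \<in> Idx" "L = Lf b" by blast
    then show "compactin X L" using Lf by simp
  next
    fix x N assume xN: "openin X N \<and> x \<in> N"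
    obtain B2 where B2: "B2 \<in> \<B>" "x \<in> B2" "B2 \<subseteq> N" using \<B>(3)[rule_format, OF xN] by blast
    have "openin X B2" using B2 \<B>(2) by blast
    then obtain U V where UV: "openin X U" "compactin X V" "x \<in> U" "U \<subseteq> V" "V \<subseteq> B2"
      using nb[unfolded neighbourhood_base_of, rule_format, OF conjI[OF _ B2(2)]] by blast
    obtain B1 where B1: "B1 \<in> \<B>" "x \<in> B1" "B1 \<subseteq> U" using \<B>(3)[rule_format, OF conjI[OF UV(1) UV(3)]] by blast
    have "\<exists>L. compactin X L \<and> B1 \<subseteq> L \<and> L \<subseteq> B2" using B1(3) UV by blast
    then have b: "(B1,B2) \<in> Idx" unfolding Idx_def using B1(1) B2(1) by simp
    have "openin X B1" using B1 \<B>(2) by blast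
    moreover have "Lf (B1,B2) \<subseteq> N" "B1 \<subseteq> Lf (B1,B2)" using Lf[OF b] B2(3) by auto
    moreover have "Lf (B1,B2) \<in> Lf ` Idx" using b by blast
    ultimately show "\<exists>L\<in>Lf ` Idx. L \<subseteq> N \<and> (\<exists>B. openin X B \<and> x \<in> B \<and> B \<subseteq> L)"
      using B1(2) by blast
  qed
qed

lemma proj_closed:
  assumes "closedin (prod_topology G X) H" "compactin X K"
  shows "closedin G {g \<in> topspace G. \<exists>x\<in>K. (g, x) \<in> H}"
proof -
  have cm: "closed_map (prod_topology G (subtopology X K)) G fst"
    by (rule closed_map_fst) (rule compact_space_subtopology[OF assms(2)])
  have "closedin (subtopology (prod_topology G X) (topspace G \<times> K)) (H \<inter> (topspace G \<times> K))"
    unfolding closedin_subtopology using assms(1) by blast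
  then have "closedin (prod_topology G (subtopology X K)) (H \<inter> (topspace G \<times> K))"
    by (simp add: prod_topology_subtopology(2))
  then have "closedin G (fst ` (H \<inter> (topspace G \<times> K)))" using cm unfolding closed_map_def by blast
  moreover have "fst ` (H \<inter> (topspace G \<times> K)) = {g \<in> topspace G. \<exists>x\<in>K. (g, x) \<in> H}"
  proof (intro Set.set_eqI iffI)
    fix g assume "g \<in> fst ` (H \<inter> (topspace G \<times> K))"
    then obtain x where "(g,x) \<in> H" "g \<in> topspace G" "x \<in> K" by auto
    then show "g \<in> {g \<in> topspace G. \<exists>x\<in>K. (g, x) \<in> H}" by blast
  next
    fix g assume "g \<in> {g \<in> topspace G. \<exists>x\<in>K. (g, x) \<in> H}"
    then obtain x where "(g,x) \<in> H" "g \<in> topspace G" "x \<in> K" by auto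
    then have "(g,x) \<in> H \<inter> (topspace G \<times> K)" by blast
    then show "g \<in> fst ` (H \<inter> (topspace G \<times> K))" by (metis fst_conv image_eqI)
  qed
  ultimately show ?thesis by simp
qed

lemma proj_nowhere_dense:
  assumes Baire: "Baire_space G" and man: "C1_manifold X m A"
    and Hc: "closedin (prod_topology G X) H"
    and sl: "\<forall>(g0, x0) \<in> H. \<exists>n > m. has_slice G X m A H g0 x0 n"
    and \<L>: "countable \<L>" "\<forall>L\<in>\<L>. compactin X L"
       "\<forall>x N. openin X N \<and> x \<in> N \<longrightarrow> (\<exists>L\<in>\<L>. L \<subseteq> N \<and> (\<exists>B. openin X B \<and> x \<in> B \<and> B \<subseteq> L))"
    and K: "compactin X K"
  shows "nowhere_dense_in G {g \<in> topspace G. \<exists>x\<in>K. (g, x) \<in> H}"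
proof -
  have Haus: "Hausdorff_space X" and at: "C1_atlas X m A" using man unfolding C1_manifold_def by blast+
  define P where "P K' = {g \<in> topspace G. \<exists>x\<in>K'. (g, x) \<in> H}" for K'
  have PK: "closedin G (P K)" unfolding P_def by (rule proj_closed[OF Hc K])
  have Ksub: "P K \<subseteq> topspace G" unfolding P_def by blast
  have "G interior_of P K = {}"
  proof (rule ccontr)
    assume "G interior_of P K \<noteq> {}"
    then obtain g' where g': "g' \<in> G interior_of P K" by blast
    define O' where "O' = G interior_of P K"
    have KL: "compactin X (K \<inter> L)" if "L \<in> \<L>" for L
    proof (rule closed_compactin[OF K])
      show "K \<inter> L \<subseteq> K" by blast
      have "closedin X K" by (rule compactin_imp_closedin[OF Haus K])
      moreover have "closedin X L" using compactin_imp_closedin[OF Haus] \<L>(2) that by blast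
      ultimately show "closedin X (K \<inter> L)" by blast
    qed
    define E where "E L = P (K \<inter> L) - G interior_of P (K \<inter> L)" for L
    define D where "D L = topspace G - E L" for L
    have CL: "closedin G (P (K \<inter> L))" if "L \<in> \<L>" for L
      unfolding P_def by (rule proj_closed[OF Hc KL[OF that]])
    have EL: "closedin G (E L)" if "L \<in> \<L>" for L
      unfolding E_def using CL[OF that] by (intro closedin_diff) auto
    have Dopen: "openin G (D L)" if "L \<in> \<L>" for L
      unfolding D_def using EL[OF that] by (intro openin_diff) auto
    have Ddense: "G closure_of (D L) = topspace G" if "L \<in> \<L>" for L
    proof -
      have "G interior_of E L \<subseteq> E L" by (rule interior_of_subset)
      moreover have "G interior_of E L \<subseteq> G interior_of P (K \<inter> L)"
        unfolding E_def by (rule interior_of_mono) blast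
      ultimately have "G interior_of E L = {}" unfolding E_def by blast
      then show ?thesis unfolding D_def closure_of_complement by simp
    qed
    have Bai: "\<forall>\<U>. countable \<U> \<and> (\<forall>U\<in>\<U>. openin G U \<and> G closure_of U = topspace G)
        \<longrightarrow> G closure_of (topspace G \<inter> \<Inter>\<U>) = topspace G"
      using Baire unfolding Baire_space_def .
    have "countable (D ` \<L>) \<and> (\<forall>U\<in>D ` \<L>. openin G U \<and> G closure_of U = topspace G)"
      using \<L>(1) Dopen Ddense by blast
    then have "G closure_of (topspace G \<inter> \<Inter>(D ` \<L>)) = topspace G" using Bai by blast
    then have "O' \<inter> (topspace G \<inter> \<Inter>(D ` \<L>)) \<noteq> {}"
    proof -
      assume dense: "G closure_of (topspace G \<inter> \<Inter>(D ` \<L>)) = topspace G"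
      show ?thesis
      proof
        assume "O' \<inter> (topspace G \<inter> \<Inter>(D ` \<L>)) = {}"
        then have "topspace G \<inter> \<Inter>(D ` \<L>) \<subseteq> topspace G - O'" by blast
        moreover have "closedin G (topspace G - O')" unfolding O'_def by (intro closedin_diff) auto
        ultimately have "G closure_of (topspace G \<inter> \<Inter>(D ` \<L>)) \<subseteq> topspace G - O'"
          by (rule closure_of_minimal)
        moreover have "g' \<in> topspace G" using g' interior_of_subset[of G "P K"] Ksub by blast
        ultimately show False using dense g' unfolding O'_def by blast
      qed
    qed
    then obtain g1 where g1O: "g1 \<in> O'" and g1t: "g1 \<in> topspace G" and g1D': "g1 \<in> \<Inter>(D ` \<L>)" by blast
    have g1D: "\<forall>L\<in>\<L>. g1 \<in> D L" using g1D' by simp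
    have "g1 \<in> P K" using g1O interior_of_subset[of G "P K"] unfolding O'_def by blast
    then obtain x1 where x1K: "x1 \<in> K" and g1x1: "(g1, x1) \<in> H" unfolding P_def by blast
    have "\<exists>n>m. has_slice G X m A H g1 x1 n" using bspec[OF sl g1x1] by simp
    then obtain n where mn: "m < n" and hs: "has_slice G X m A H g1 x1 n" by blast
    then obtain U V \<Phi> where sa: "slice_across G X m A H g1 x1 n U V \<Phi>" unfolding has_slice_def by blast
    obtain N where N: "openin X N" "x1 \<in> N" "N \<subseteq> V"
      and Nprop: "\<forall>\<epsilon>>0. \<exists>s\<in>U. (\<forall>i<n. \<bar>s i\<bar> < \<epsilon>) \<and> (\<forall>x\<in>N. \<Phi> s x \<noteq> (\<lambda>i. 0))"
      using slice_local[OF at sa mn] by blast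
    obtain L where L: "L \<in> \<L>" "L \<subseteq> N" and "\<exists>B. openin X B \<and> x1 \<in> B \<and> B \<subseteq> L"
      using \<L>(3)[rule_format, OF conjI[OF N(1) N(2)]] by blast
    then have x1L: "x1 \<in> L" by blast
    have "g1 \<in> P (K \<inter> L)" unfolding P_def using g1t x1K x1L g1x1 by blast
    moreover have "g1 \<notin> E L" using g1D L(1) unfolding D_def by blast
    ultimately have g1I: "g1 \<in> G interior_of P (K \<inter> L)" unfolding E_def by blast
    have U: "openin (Euclidean_space n) U" and U0: "(\<lambda>i. 0) \<in> U"
      using sa unfolding slice_across_def by blast+
    have "\<exists>\<rho> \<pi>.
        continuous_map (subtopology (Euclidean_space n) U) G \<rho> \<and> \<rho> (\<lambda>i. 0) = g1 \<and>
        continuous_map (subtopology (prod_topology G X) (\<rho> ` U \<times> V)) (Euclidean_space n) (\<lambda>(g,x). \<pi> g x) \<and>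
        (\<forall>g x. (g, x) \<in> H \<inter> (\<rho> ` U \<times> V) \<longrightarrow> \<pi> g x = (\<lambda>i. 0)) \<and>
        (\<forall>s\<in>U. \<forall>x\<in>V. \<Phi> s x = \<pi> (\<rho> s) x)"
      using sa unfolding slice_across_def by (elim conjE)
    then obtain \<rho> \<pi> where \<rho>: "continuous_map (subtopology (Euclidean_space n) U) G \<rho>" "\<rho> (\<lambda>i. 0) = g1"
      and \<pi>0: "\<forall>g x. (g, x) \<in> H \<inter> (\<rho> ` U \<times> V) \<longrightarrow> \<pi> g x = (\<lambda>i. 0)"
      and \<Phi>\<pi>: "\<forall>s\<in>U. \<forall>x\<in>V. \<Phi> s x = \<pi> (\<rho> s) x"
      by (elim exE conjE)
    define I where "I = G interior_of P (K \<inter> L)"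
    have "openin (subtopology (Euclidean_space n) U) {s \<in> topspace (subtopology (Euclidean_space n) U). \<rho> s \<in> I}"
      by (rule openin_continuous_map_preimage[OF \<rho>(1)]) (simp add: I_def)
    then have opI: "openin (Euclidean_space n) {s \<in> topspace (subtopology (Euclidean_space n) U). \<rho> s \<in> I}"
      using openin_trans_full U by blast
    have Usub: "U \<subseteq> topspace (Euclidean_space n)" using U openin_subset by blast
    have "(\<lambda>i. 0) \<in> {s \<in> topspace (subtopology (Euclidean_space n) U). \<rho> s \<in> I}"
      using U0 Usub \<rho>(2) g1I unfolding I_def by auto
    from box_lemma[OF opI this] obtain rB where rB: "rB > 0"
      "\<forall>z\<in>topspace (Euclidean_space n). (\<forall>l<n. \<bar>z l - 0\<bar> < rB) \<longrightarrow>
          z \<in> {s \<in> topspace (subtopology (Euclidean_space n) U). \<rho> s \<in> I}" by blast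
    obtain s where sU: "s \<in> U" and ss: "\<forall>i<n. \<bar>s i\<bar> < rB" and sN: "\<forall>x\<in>N. \<Phi> s x \<noteq> (\<lambda>i. 0)"
      using Nprop[rule_format, OF rB(1)] by blast
    have "\<forall>l<n. \<bar>s l - 0\<bar> < rB" using ss by simp
    moreover have "s \<in> topspace (Euclidean_space n)" using sU Usub by blast
    ultimately have "s \<in> {s \<in> topspace (subtopology (Euclidean_space n) U). \<rho> s \<in> I}" using rB(2) by blast
    then have "\<rho> s \<in> I" by blast
    then have "\<rho> s \<in> P (K \<inter> L)" unfolding I_def using interior_of_subset[of G "P (K \<inter> L)"] by blast
    then obtain x where xKL: "x \<in> K \<inter> L" and H1: "(\<rho> s, x) \<in> H" unfolding P_def by blast
    have xN: "x \<in> N" using xKL L(2) by blast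
    then have xV: "x \<in> V" using N(3) by blast
    have "(\<rho> s, x) \<in> H \<inter> (\<rho> ` U \<times> V)" using H1 sU xV by blast
    then have "\<pi> (\<rho> s) x = (\<lambda>i. 0)" using \<pi>0[rule_format] by blast
    then have "\<Phi> s x = (\<lambda>i. 0)" using \<Phi>\<pi> sU xV by simp
    then show False using sN xN by blast
  qed
  then show ?thesis unfolding nowhere_dense_in_def P_def[symmetric]
    using Ksub closure_of_closedin[OF PK] by simp
qed

theorem theorem4p2:
  fixes G :: "'g topology" and X :: "'x topology" and m :: nat
    and A :: "('x set \<times> ('x \<Rightarrow> (nat \<Rightarrow> real))) set" and H :: "('g \<times> 'x) set"
  assumes "second_countable G" and "Baire_space G"
    and "C1_manifold X m A"
    and "closedin (prod_topology G X) H"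
    and "\<forall>(g0, x0) \<in> H. \<exists>n > m. has_slice G X m A H g0 x0 n"
  shows "meager_in G {g \<in> topspace G. \<exists>x \<in> topspace X. (g, x) \<in> H} \<and>
           (compact_space X \<longrightarrow>
           closedin G {g \<in> topspace G. \<exists>x \<in> topspace X. (g, x) \<in> H} \<and>
           nowhere_dense_in G {g \<in> topspace G. \<exists>x \<in> topspace X. (g, x) \<in> H})"
proof -
  obtain \<L> where \<L>: "countable \<L>" "\<forall>L\<in>\<L>. compactin X L"
       "\<forall>x N. openin X N \<and> x \<in> N \<longrightarrow> (\<exists>L\<in>\<L>. L \<subseteq> N \<and> (\<exists>B. openin X B \<and> x \<in> B \<and> B \<subseteq> L))"
    using compact_family[OF assms(3)] by blast
  define P where "P K' = {g \<in> topspace G. \<exists>x\<in>K'. (g, x) \<in> H}" for K'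
  have nd: "nowhere_dense_in G (P K)" if "compactin X K" for K
    unfolding P_def by (rule proj_nowhere_dense[OF assms(2,3,4,5) \<L> that])
  have meager: "meager_in G (P (topspace X))"
    unfolding meager_in_def
  proof (intro exI[of _ "P ` \<L>"] conjI ballI)
    show "countable (P ` \<L>)" using \<L>(1) by simp
  next
    fix N assume "N \<in> P ` \<L>"
    then obtain L where "L \<in> \<L>" "N = P L" by blast
    then show "nowhere_dense_in G N" using nd \<L>(2) by blast
  next
    show "P (topspace X) = \<Union> (P ` \<L>)"
    proof (intro Set.set_eqI iffI)
      fix g assume "g \<in> P (topspace X)"
      then obtain x where gx: "g \<in> topspace G" "x \<in> topspace X" "(g, x) \<in> H" unfolding P_def by blast
      have "openin X (topspace X) \<and> x \<in> topspace X" using gx(2) by simp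
      from \<L>(3)[rule_format, OF this] obtain L B where "L \<in> \<L>" "openin X B" "x \<in> B" "B \<subseteq> L" by blast
      then have "g \<in> P L" unfolding P_def using gx by blast
      then show "g \<in> \<Union> (P ` \<L>)" using \<open>L \<in> \<L>\<close> by blast
    next
      fix g assume "g \<in> \<Union> (P ` \<L>)"
      then obtain L where L: "L \<in> \<L>" "g \<in> P L" by blast
      have "L \<subseteq> topspace X" using \<L>(2) L(1) compactin_subset_topspace by blast
      then show "g \<in> P (topspace X)" using L(2) unfolding P_def by blast
    qed
  qed
  have cpt: "closedin G (P (topspace X)) \<and> nowhere_dense_in G (P (topspace X))" if "compact_space X"
  proof -
    have K: "compactin X (topspace X)" using that unfolding compact_space_def .
    show ?thesis using proj_closed[OF assms(4) K] nd[OF K] unfolding P_def by blast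
  qed
  show ?thesis using meager cpt unfolding P_def by blast
qed

end
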